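(* Let $A$ be a nonempty set of positive integers and let $n$ be a positive integer. Then (a) $\displaystyle nN^p_A(n)=\sum_{k=1}^{n-1}N^p_A(k)\sigma_A(n-k)+\sum_{t=1}^{n}t\,\tau_A(t)\,p_A(n-t)$; (b) $\displaystyle nN^q_A(n)=\sum_{k=1}^{n-1}N^q_A(k)\sigma^s_A(n-k)+\sum_{t=1}^{n}t\,\tau^s_A(t)\,q_A(n-t)$.
   Context: For a set $A$ of positive integers: $N^p_A(n)$ (resp. $N^q_A(n)$) is the total number of parts, summed over all partitions (resp. partitions into pairwise distinct parts) of $n$ with parts in $A$; $p_A(m)$ (resp. $q_A(m)$) is the number of partitions (resp. partitions into distinct parts) of $m$ with parts in $A$, with $p_A(0)=q_A(0)=1$. $\tau_A(n)=\sum_{a\in A,\,a\mid n}1$, $\tau^s_A(n)=\sum_{a\in A,\,a\mid n}(-1)^{n/a-1}$, $\sigma_A(n)=\sum_{a\in A,\,a\mid n}a$, $\sigma^s_A(n)=\sum_{a\in A,\,a\mid n}(-1)^{n/a-1}a$. *)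

theory Defs
  imports Main "HOL-Library.Multiset"
begin

definition parts_p :: "nat set \<Rightarrow> nat \<Rightarrow> nat multiset set" where
  "parts_p A n = {M. set_mset M \<subseteq> A \<and> sum_mset M = n}"

definition parts_q :: "nat set \<Rightarrow> nat \<Rightarrow> nat set set" where
  "parts_q A n = {S. finite S \<and> S \<subseteq> A \<and> \<Sum>S = n}"

definition p_A :: "nat set \<Rightarrow> nat \<Rightarrow> nat" where
  "p_A A m = card (parts_p A m)"

definition q_A :: "nat set \<Rightarrow> nat \<Rightarrow> nat" where
  "q_A A m = card (parts_q A m)"

definition Np :: "nat set \<Rightarrow> nat \<Rightarrow> nat" where
  "Np A n = (\<Sum>M\<in>parts_p A n. size M)"

definition Nq :: "nat set \<Rightarrow> nat \<Rightarrow> nat" where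
  "Nq A n = (\<Sum>S\<in>parts_q A n. card S)"

definition tau_A :: "nat set \<Rightarrow> nat \<Rightarrow> int" where
  "tau_A A n = (\<Sum>a\<in>{a\<in>A. a dvd n}. 1)"

definition tau_s_A :: "nat set \<Rightarrow> nat \<Rightarrow> int" where
  "tau_s_A A n = (\<Sum>a\<in>{a\<in>A. a dvd n}. (-1) ^ (n div a - 1))"

definition sigma_A :: "nat set \<Rightarrow> nat \<Rightarrow> int" where
  "sigma_A A n = (\<Sum>a\<in>{a\<in>A. a dvd n}. int a)"

definition sigma_s_A :: "nat set \<Rightarrow> nat \<Rightarrow> int" where
  "sigma_s_A A n = (\<Sum>a\<in>{a\<in>A. a dvd n}. (-1) ^ (n div a - 1) * int a)"

end

theory Submission
  imports Defs
begin

lemma msum_count: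
  fixes f :: "nat \<Rightarrow> 'b::comm_semiring_1"
  assumes "finite B" "set_mset M \<subseteq> B"
  shows "(\<Sum>x\<in>#M. f x) = (\<Sum>x\<in>B. of_nat (count M x) * f x)"
  using assms(2)
proof (induction M)
  case empty
  then show ?case by simp
next
  case (add x M)
  have xB: "x \<in> B" using add.prems by auto
  have "(\<Sum>y\<in>B. of_nat (count (add_mset x M) y) * f y)
      = (\<Sum>y\<in>B. of_nat (count M y) * f y + (if y = x then f x else 0))"
    by (rule sum.cong) (auto simp: algebra_simps)
  also have "\<dots> = (\<Sum>y\<in>B. of_nat (count M y) * f y) + f x"
    using assms(1) xB by (simp add: sum.distrib)
  finally show ?case using add by (simp add: add.commute)
qed

lemma mem_le_msum: "x \<in># M \<Longrightarrow> x \<le> sum_mset (M::nat multiset)"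
  by (metis le_add1 sum_mset.remove)

lemma parts_p_sub:
  assumes "M \<in> parts_p A m"
  shows "set_mset M \<subseteq> {a\<in>A. a \<le> m}"
  using assms mem_le_msum unfolding parts_p_def by auto

lemma parts_p_count:
  assumes pos: "\<forall>a\<in>A. 0 < a" and M: "M \<in> parts_p A m"
  shows "(\<Sum>x\<in>{a\<in>A. a \<le> m}. count M x * x) = m"
    and "size M = (\<Sum>x\<in>{a\<in>A. a \<le> m}. count M x)"
proof -
  have fin: "finite {a\<in>A. a \<le> m}" by simp
  have "sum_mset M = (\<Sum>x\<in>{a\<in>A. a \<le> m}. of_nat (count M x) * x)"
    using msum_count[OF fin parts_p_sub[OF M], of "\<lambda>x. x"] by simp
  then show "(\<Sum>x\<in>{a\<in>A. a \<le> m}. count M x * x) = m" using M by (simp add: parts_p_def)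
  have "size M = (\<Sum>x\<in>#M. (1::nat))" by (rule size_eq_sum_mset)
  also have "\<dots> = (\<Sum>x\<in>{a\<in>A. a \<le> m}. of_nat (count M x) * 1)"
    by (rule msum_count[OF fin parts_p_sub[OF M]])
  also have "\<dots> = (\<Sum>x\<in>{a\<in>A. a \<le> m}. count M x)" by simp
  finally show "size M = (\<Sum>x\<in>{a\<in>A. a \<le> m}. count M x)" .
qed

lemma finite_parts_p:
  assumes pos: "\<forall>a\<in>A. 0 < a"
  shows "finite (parts_p A m)"
proof -
  have "parts_p A m \<subseteq> (\<Union>k\<in>{..m}. multisets_of_size {a\<in>A. a \<le> m} k)"
  proof
    fix M assume M: "M \<in> parts_p A m"
    have "size M = (\<Sum>x\<in>{a\<in>A. a \<le> m}. count M x)" using parts_p_count(2)[OF pos M] .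
    also have "\<dots> \<le> (\<Sum>x\<in>{a\<in>A. a \<le> m}. count M x * x)"
      by (rule sum_mono) (use pos in auto)
    also have "\<dots> = m" using parts_p_count(1)[OF pos M] .
    finally show "M \<in> (\<Union>k\<in>{..m}. multisets_of_size {a\<in>A. a \<le> m} k)"
      using parts_p_sub[OF M] by (auto simp: multisets_of_size_def)
  qed
  moreover have "finite (\<Union>k\<in>{..m}. multisets_of_size {a\<in>A. a \<le> m} k)" by auto
  ultimately show ?thesis by (rule finite_subset)
qed

lemma finite_parts_q: "finite (parts_q A m)"
proof -
  have "parts_q A m \<subseteq> Pow {..m}"
    unfolding parts_q_def using member_le_sum by fastforce
  then show ?thesis by (rule finite_subset) simp
qed

lemma parts_q_sub: "S \<in> parts_q A m \<Longrightarrow> S \<subseteq> {a\<in>A. a \<le> m}"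
  unfolding parts_q_def using member_le_sum by fastforce

lemma card_count_ge:
  assumes a: "a \<in> A" and j: "j * a \<le> m"
  shows "card {M\<in>parts_p A m. j \<le> count M a} = p_A A (m - j*a)"
proof -
  let ?R = "replicate_mset j a"
  have "bij_betw (\<lambda>M. M - ?R) {M\<in>parts_p A m. j \<le> count M a} (parts_p A (m - j*a))"
  proof (rule bij_betw_byWitness[where f' = "\<lambda>N. N + ?R"])
    show "\<forall>M\<in>{M\<in>parts_p A m. j \<le> count M a}. M - ?R + ?R = M"
    proof
      fix M assume "M \<in> {M\<in>parts_p A m. j \<le> count M a}"
      then have "?R \<subseteq># M" by (simp add: subseteq_mset_def count_replicate_mset)
      then show "M - ?R + ?R = M" by (rule subset_mset.diff_add)
    qed
    show "\<forall>N\<in>parts_p A (m - j*a). N + ?R - ?R = N" by simp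
    show "(\<lambda>M. M - ?R) ` {M\<in>parts_p A m. j \<le> count M a} \<subseteq> parts_p A (m - j*a)"
    proof
      fix N assume "N \<in> (\<lambda>M. M - ?R) ` {M\<in>parts_p A m. j \<le> count M a}"
      then obtain M where M: "M \<in> parts_p A m" "j \<le> count M a" and N: "N = M - ?R" by auto
      have sub: "?R \<subseteq># M" using M(2) by (simp add: subseteq_mset_def count_replicate_mset)
      have MN: "M = N + ?R" using sub N by (simp add: subset_mset.diff_add)
      have "sum_mset M = sum_mset N + sum_mset ?R" unfolding MN by (rule sum_mset.union)
      then have "sum_mset N + j*a = m" using M(1) by (simp add: parts_p_def mult.commute)
      then have "sum_mset N = m - j*a" by arith
      moreover have "set_mset N \<subseteq> A" using M(1) N
        by (auto simp: parts_p_def dest: in_diffD)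
      ultimately show "N \<in> parts_p A (m - j*a)" by (simp add: parts_p_def)
    qed
    show "(\<lambda>N. N + ?R) ` parts_p A (m - j*a) \<subseteq> {M\<in>parts_p A m. j \<le> count M a}"
    proof
      fix M assume "M \<in> (\<lambda>N. N + ?R) ` parts_p A (m - j*a)"
      then obtain N where N: "N \<in> parts_p A (m - j*a)" and M: "M = N + ?R" by blast
      have "sum_mset M = sum_mset N + j * a" using M by simp
      also have "\<dots> = m" using N j by (simp add: parts_p_def)
      finally have "sum_mset M = m" .
      moreover have "set_mset M \<subseteq> A" using N M a by (auto simp: parts_p_def)
      moreover have "j \<le> count M a" using M by simp
      ultimately show "M \<in> {M\<in>parts_p A m. j \<le> count M a}" by (simp add: parts_p_def)
    qed
  qed
  then show ?thesis unfolding p_A_def by (rule bij_betw_same_card)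
qed

lemma sum_le_indicator:
  assumes "c \<le> k"
  shows "(\<Sum>j=1..k. if j \<le> c then (1::int) else 0) = int c"
proof -
  have "(\<Sum>j=1..k. if j \<le> c then (1::int) else 0) = (\<Sum>j\<in>{j\<in>{1..k}. j \<le> c}. 1)"
    by (rule sum.inter_filter[symmetric]) simp
  also have "{j\<in>{1..k}. j \<le> c} = {1..c}" using assms by auto
  finally show ?thesis by simp
qed

lemma count_bound:
  assumes pos: "\<forall>a\<in>A. 0 < a" and M: "M \<in> parts_p A m" and a: "a \<in> A" "a \<le> m"
  shows "count M a \<le> m div a"
proof -
  have "count M a * a \<le> (\<Sum>x\<in>{a\<in>A. a \<le> m}. count M x * x)"
    by (rule member_le_sum) (use a in auto)
  then have "count M a * a \<le> m" using parts_p_count(1)[OF pos M] by simp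
  then show ?thesis using pos a by (simp add: less_eq_div_iff_mult_less_eq)
qed

lemma weighted_p:
  fixes w :: "nat \<Rightarrow> int"
  assumes pos: "\<forall>a\<in>A. 0 < a"
  shows "(\<Sum>M\<in>parts_p A m. \<Sum>a\<in>{a\<in>A. a \<le> m}. w a * int (count M a))
       = (\<Sum>a\<in>{a\<in>A. a \<le> m}. \<Sum>j=1..m div a. w a * int (p_A A (m - j*a)))"
proof -
  have "(\<Sum>M\<in>parts_p A m. \<Sum>a\<in>{a\<in>A. a \<le> m}. w a * int (count M a))
      = (\<Sum>a\<in>{a\<in>A. a \<le> m}. \<Sum>M\<in>parts_p A m. w a * int (count M a))"
    by (rule sum.swap)
  also have "\<dots> = (\<Sum>a\<in>{a\<in>A. a \<le> m}. \<Sum>j=1..m div a. w a * int (p_A A (m - j*a)))"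
  proof (rule sum.cong[OF refl])
    fix a assume a: "a \<in> {a\<in>A. a \<le> m}"
    have "(\<Sum>M\<in>parts_p A m. int (count M a))
        = (\<Sum>M\<in>parts_p A m. \<Sum>j=1..m div a. if j \<le> count M a then 1 else 0)"
      by (rule sum.cong[OF refl], rule sum_le_indicator[symmetric], rule count_bound[OF pos]) (use a in auto)
    also have "\<dots> = (\<Sum>j=1..m div a. \<Sum>M\<in>parts_p A m. if j \<le> count M a then 1 else 0)"
      by (rule sum.swap)
    also have "\<dots> = (\<Sum>j=1..m div a. int (p_A A (m - j*a)))"
    proof (rule sum.cong[OF refl])
      fix j assume j: "j \<in> {1..m div a}"
      have ja: "j * a \<le> m" using j a pos by (auto simp: less_eq_div_iff_mult_less_eq)
      have "(\<Sum>M\<in>parts_p A m. if j \<le> count M a then 1 else 0)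
          = (\<Sum>M\<in>{M\<in>parts_p A m. j \<le> count M a}. (1::int))"
        using finite_parts_p[OF pos] by (rule sum.inter_filter[symmetric])
      also have "\<dots> = int (p_A A (m - j*a))" using card_count_ge[of a A j m] a ja by simp
      finally show "(\<Sum>M\<in>parts_p A m. if j \<le> count M a then 1 else 0) = int (p_A A (m - j*a))" .
    qed
    finally have e: "(\<Sum>M\<in>parts_p A m. int (count M a)) = (\<Sum>j=1..m div a. int (p_A A (m - j*a)))" .
    have "(\<Sum>M\<in>parts_p A m. w a * int (count M a)) = w a * (\<Sum>M\<in>parts_p A m. int (count M a))"
      by (rule sum_distrib_left[symmetric])
    also have "\<dots> = w a * (\<Sum>j=1..m div a. int (p_A A (m - j*a)))" by (simp only: e)
    also have "\<dots> = (\<Sum>j=1..m div a. w a * int (p_A A (m - j*a)))"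
      by (rule sum_distrib_left)
    finally show "(\<Sum>M\<in>parts_p A m. w a * int (count M a)) = (\<Sum>j=1..m div a. w a * int (p_A A (m - j*a)))" .
  qed
  finally show ?thesis .
qed

lemma sum_split_first: "(\<Sum>j=1..Suc K. h j) = h 1 + (\<Sum>j=1..K. h (Suc j))" for h :: "nat \<Rightarrow> int"
  by (induction K) (auto simp: add.assoc)

lemma Q_rec:
  assumes pos: "\<forall>a\<in>A. 0 < a" and a: "a \<in> A"
  shows "int (card {S\<in>parts_q A m. a \<in> S}) = (\<Sum>j=1..m div a. (-1)^(j-1) * int (q_A A (m - j*a)))"
proof (induction m rule: less_induct)
  case (less m)
  have a0: "0 < a" using pos a by auto
  show ?case
  proof (cases "a \<le> m")
    case False
    then have e: "{S\<in>parts_q A m. a \<in> S} = {}" using parts_q_sub by fastforce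
    have "m div a = 0" using False by simp
    then show ?thesis unfolding e by simp
  next
    case True
    let ?Q = "\<lambda>x. card {S\<in>parts_q A x. a \<in> S}"
    have "bij_betw (\<lambda>S. S - {a}) {S\<in>parts_q A m. a \<in> S} {S\<in>parts_q A (m-a). a \<notin> S}"
    proof (rule bij_betw_byWitness[where f' = "\<lambda>S. insert a S"])
      show "\<forall>S\<in>{S\<in>parts_q A m. a \<in> S}. insert a (S - {a}) = S" by auto
      show "\<forall>S\<in>{S\<in>parts_q A (m-a). a \<notin> S}. insert a S - {a} = S" by auto
      show "(\<lambda>S. S - {a}) ` {S\<in>parts_q A m. a \<in> S} \<subseteq> {S\<in>parts_q A (m-a). a \<notin> S}"
      proof
        fix T assume "T \<in> (\<lambda>S. S - {a}) ` {S\<in>parts_q A m. a \<in> S}"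
        then obtain S where S: "S \<in> parts_q A m" "a \<in> S" and T: "T = S - {a}" by auto
        have "\<Sum>S = a + \<Sum>T" using S T sum.remove[of S a "\<lambda>x. x"] by (auto simp: parts_q_def)
        then show "T \<in> {S\<in>parts_q A (m-a). a \<notin> S}" using S T by (auto simp: parts_q_def)
      qed
      show "insert a ` {S\<in>parts_q A (m-a). a \<notin> S} \<subseteq> {S\<in>parts_q A m. a \<in> S}"
        using True a by (auto simp: parts_q_def)
    qed
    then have c1: "?Q m = card {S\<in>parts_q A (m-a). a \<notin> S}" by (rule bij_betw_same_card)
    have eq: "{S\<in>parts_q A (m-a). a \<notin> S} \<union> {S\<in>parts_q A (m-a). a \<in> S} = parts_q A (m-a)" by auto
    have f1: "finite {S\<in>parts_q A (m-a). a \<notin> S}" using finite_parts_q by simp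
    have f2: "finite {S\<in>parts_q A (m-a). a \<in> S}" using finite_parts_q by simp
    have "card ({S\<in>parts_q A (m-a). a \<notin> S} \<union> {S\<in>parts_q A (m-a). a \<in> S})
       = card {S\<in>parts_q A (m-a). a \<notin> S} + ?Q (m-a)"
      by (rule card_Un_disjoint[OF f1 f2]) auto
    then have c2: "q_A A (m-a) = card {S\<in>parts_q A (m-a). a \<notin> S} + ?Q (m-a)"
      unfolding q_A_def by (simp only: eq)
    have IH: "int (?Q (m-a)) = (\<Sum>j=1..(m-a) div a. (-1)^(j-1) * int (q_A A (m - a - j*a)))"
      using less.IH[of "m-a"] a0 True by simp
    define K where "K = (m-a) div a"
    have md: "m div a = Suc K" unfolding K_def using a0 True by (simp add: le_div_geq)
    have s1: "(\<Sum>j=1..m div a. (-1)^(j-1) * int (q_A A (m - j*a)))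
        = int (q_A A (m - a)) + (\<Sum>j=1..K. (-1)^j * int (q_A A (m - Suc j*a)))"
      unfolding md sum_split_first by simp
    have s2: "(\<Sum>j=1..K. (-1)^j * int (q_A A (m - Suc j*a)))
        = - (\<Sum>j=1..K. (-1)^(j-1) * int (q_A A (m - a - j*a)))"
      unfolding sum_negf[symmetric]
    proof (rule sum.cong[OF refl])
      fix j assume "j \<in> {1..K}"
      then obtain i where i: "j = Suc i" by (cases j) auto
      show "(-1)^j * int (q_A A (m - Suc j*a)) = - ((-1)^(j-1) * int (q_A A (m - a - j*a)))"
        unfolding i by (simp add: diff_diff_left add.commute)
    qed
    have calc: "(\<Sum>j=1..m div a. (-1)^(j-1) * int (q_A A (m - j*a)))
        = int (q_A A (m - a)) + - (\<Sum>j=1..K. (-1)^(j-1) * int (q_A A (m - a - j*a)))"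
      using s1 s2 by simp
    have "int (?Q m) = int (q_A A (m-a)) - int (?Q (m-a))" using c1 c2 by simp
    then show ?thesis using calc IH[folded K_def] by linarith
  qed
qed

lemma weighted_q:
  fixes w :: "nat \<Rightarrow> int"
  shows "(\<Sum>S\<in>parts_q A m. \<Sum>a\<in>S. w a)
       = (\<Sum>a\<in>{a\<in>A. a \<le> m}. w a * int (card {S\<in>parts_q A m. a \<in> S}))"
proof -
  have "(\<Sum>S\<in>parts_q A m. \<Sum>a\<in>S. w a) = (\<Sum>S\<in>parts_q A m. \<Sum>a\<in>{a\<in>A. a \<le> m}. if a \<in> S then w a else 0)"
  proof (rule sum.cong[OF refl])
    fix S assume S: "S \<in> parts_q A m"
    have "(\<Sum>a\<in>{a\<in>A. a \<le> m}. if a \<in> S then w a else 0) = (\<Sum>a\<in>{x\<in>{a\<in>A. a \<le> m}. x \<in> S}. w a)"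
      by (rule sum.inter_filter[symmetric]) simp
    also have "{x\<in>{a\<in>A. a \<le> m}. x \<in> S} = S" using parts_q_sub[OF S] by auto
    finally show "(\<Sum>a\<in>S. w a) = (\<Sum>a\<in>{a\<in>A. a \<le> m}. if a \<in> S then w a else 0)" by simp
  qed
  also have "\<dots> = (\<Sum>a\<in>{a\<in>A. a \<le> m}. \<Sum>S\<in>parts_q A m. if a \<in> S then w a else 0)"
    by (rule sum.swap)
  also have "\<dots> = (\<Sum>a\<in>{a\<in>A. a \<le> m}. w a * int (card {S\<in>parts_q A m. a \<in> S}))"
  proof (rule sum.cong[OF refl])
    fix a
    have "(\<Sum>S\<in>parts_q A m. if a \<in> S then w a else 0) = (\<Sum>S\<in>{S\<in>parts_q A m. a \<in> S}. w a)"
      using finite_parts_q by (rule sum.inter_filter[symmetric])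
    then show "(\<Sum>S\<in>parts_q A m. if a \<in> S then w a else 0) = w a * int (card {S\<in>parts_q A m. a \<in> S})"
      by (simp add: mult.commute)
  qed
  finally show ?thesis .
qed

lemma reindexG:
  fixes g :: "nat \<Rightarrow> nat \<Rightarrow> int" and f :: "nat \<Rightarrow> int"
  assumes pos: "\<forall>a\<in>A. 0 < a"
  shows "(\<Sum>a\<in>{a\<in>A. a \<le> m}. \<Sum>j=1..m div a. g a j * f (m - j*a))
       = (\<Sum>s=1..m. f (m-s) * (\<Sum>a\<in>{a\<in>A. a dvd s}. g a (s div a)))"
proof -
  have fin2: "finite {a\<in>A. a dvd s}" if "s \<in> {1..m}" for s
    by (rule finite_subset[of _ "{..s}"]) (use that in \<open>auto dest: dvd_imp_le\<close>)
  have "(\<Sum>a\<in>{a\<in>A. a \<le> m}. \<Sum>j=1..m div a. g a j * f (m - j*a))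
      = (\<Sum>(a,j)\<in>Sigma {a\<in>A. a \<le> m} (\<lambda>a. {1..m div a}). g a j * f (m - j*a))"
    by (rule sum.Sigma) auto
  also have "\<dots> = (\<Sum>(s,a)\<in>Sigma {1..m} (\<lambda>s. {a\<in>A. a dvd s}). f (m-s) * g a (s div a))"
  proof (rule sum.reindex_bij_witness[where j = "\<lambda>(a,k). (k*a, a)" and i = "\<lambda>(s,a). (a, s div a)"])
    fix x assume x: "x \<in> Sigma {a\<in>A. a \<le> m} (\<lambda>a. {1..m div a})"
    obtain a k where ak: "x = (a,k)" by (cases x)
    have a0: "0 < a" using x ak pos by auto
    have km: "k*a \<le> m" using x ak a0 by (auto simp: less_eq_div_iff_mult_less_eq)
    show "(case case x of (a, k) \<Rightarrow> (k * a, a) of (s, a) \<Rightarrow> (a, s div a)) = x"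
      using ak a0 by simp
    show "(case x of (a, k) \<Rightarrow> (k * a, a)) \<in> Sigma {1..m} (\<lambda>s. {a \<in> A. a dvd s})"
      using ak a0 km x by auto
    show "(case case x of (a, k) \<Rightarrow> (k * a, a) of (s, a) \<Rightarrow> f (m - s) * g a (s div a)) =
          (case x of (a, j) \<Rightarrow> g a j * f (m - j * a))"
      using ak a0 by simp
  next
    fix y assume y: "y \<in> Sigma {1..m} (\<lambda>s. {a\<in>A. a dvd s})"
    obtain s a where sa: "y = (s,a)" by (cases y)
    have a0: "0 < a" using y sa pos by auto
    have as: "a dvd s" "1 \<le> s" "s \<le> m" "a \<in> A" using y sa by auto
    have "a \<le> s" using as by (simp add: dvd_imp_le)
    moreover have "1 \<le> s div a" using as a0 by (metis One_nat_def Suc_leI div_greater_zero_iff dvd_imp_le le_trans less_one not_less)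
    moreover have "s div a \<le> m div a" using as by (simp add: div_le_mono)
    ultimately show "(case y of (s, a) \<Rightarrow> (a, s div a)) \<in> Sigma {a \<in> A. a \<le> m} (\<lambda>a. {1..m div a})"
      using sa as by auto
    show "(case case y of (s, a) \<Rightarrow> (a, s div a) of (a, k) \<Rightarrow> (k * a, a)) = y"
      using sa as by simp
  qed
  also have "\<dots> = (\<Sum>s=1..m. \<Sum>a\<in>{a\<in>A. a dvd s}. f (m-s) * g a (s div a))"
    by (rule sum.Sigma[symmetric]) (use fin2 in auto)
  also have "\<dots> = (\<Sum>s=1..m. f (m-s) * (\<Sum>a\<in>{a\<in>A. a dvd s}. g a (s div a)))"
    by (simp add: sum_distrib_left)
  finally show ?thesis .
qed

lemma alg:
  fixes N P tau sig :: "nat \<Rightarrow> int"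
  assumes hN: "\<And>m. N m = (\<Sum>t=1..m. tau t * P (m-t))"
    and hP: "\<And>m. int m * P m = (\<Sum>s=1..m. sig s * P (m-s))"
  shows "int n * N n = (\<Sum>k=1..n-1. N k * sig (n-k)) + (\<Sum>t=1..n. int t * tau t * P (n-t))"
proof -
  have "int n * N n = (\<Sum>t=1..n. int n * (tau t * P (n-t)))" by (simp add: hN sum_distrib_left)
  also have "\<dots> = (\<Sum>t=1..n. int t * tau t * P (n-t) + tau t * (int (n-t) * P (n-t)))"
    by (rule sum.cong[OF refl]) (auto simp: of_nat_diff algebra_simps)
  also have "\<dots> = (\<Sum>t=1..n. int t * tau t * P (n-t)) + (\<Sum>t=1..n. \<Sum>s=1..n-t. tau t * sig s * P (n-t-s))"
  proof -
    have hP': "\<And>t. tau t * (int (n-t) * P (n-t)) = (\<Sum>s=1..n-t. tau t * sig s * P (n-t-s))"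
      by (simp only: hP sum_distrib_left mult.assoc)
    show ?thesis by (simp only: sum.distrib hP')
  qed
  also have "(\<Sum>t=1..n. \<Sum>s=1..n-t. tau t * sig s * P (n-t-s)) = (\<Sum>k=1..n-1. N k * sig (n-k))"
  proof -
    have "(\<Sum>t=1..n. \<Sum>s=1..n-t. tau t * sig s * P (n-t-s))
        = (\<Sum>(t,s)\<in>Sigma {1..n} (\<lambda>t. {1..n-t}). tau t * sig s * P (n-t-s))"
      by (rule sum.Sigma) auto
    also have "\<dots> = (\<Sum>(k,t)\<in>Sigma {1..n-1} (\<lambda>k. {1..k}). tau t * P (k-t) * sig (n-k))"
      by (rule sum.reindex_bij_witness[where j = "\<lambda>(t,s). (n-s, t)" and i = "\<lambda>(k,t). (t, n-k)"])
         (auto simp: diff_diff_left add.commute)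
    also have "\<dots> = (\<Sum>k=1..n-1. \<Sum>t=1..k. tau t * P (k-t) * sig (n-k))"
      by (rule sum.Sigma[symmetric]) auto
    also have "\<dots> = (\<Sum>k=1..n-1. N k * sig (n-k))"
      by (simp add: hN sum_distrib_right)
    finally show ?thesis .
  qed
  finally show ?thesis by simp
qed

lemma p_N:
  assumes pos: "\<forall>a\<in>A. 0 < a"
  shows "int (Np A m) = (\<Sum>t=1..m. tau_A A t * int (p_A A (m-t)))"
proof -
  have "int (Np A m) = (\<Sum>M\<in>parts_p A m. \<Sum>a\<in>{a\<in>A. a \<le> m}. (\<lambda>_. 1::int) a * int (count M a))"
    unfolding Np_def of_nat_sum
    by (rule sum.cong[OF refl]) (simp add: parts_p_count(2)[OF pos])
  also have "\<dots> = (\<Sum>a\<in>{a\<in>A. a \<le> m}. \<Sum>j=1..m div a. (\<lambda>a j. 1::int) a j * (\<lambda>x. int (p_A A x)) (m - j*a))"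
    unfolding weighted_p[OF pos] by simp
  also have "\<dots> = (\<Sum>s=1..m. (\<lambda>x. int (p_A A x)) (m-s) * (\<Sum>a\<in>{a\<in>A. a dvd s}. (\<lambda>a j. 1::int) a (s div a)))"
    by (rule reindexG[OF pos])
  also have "\<dots> = (\<Sum>t=1..m. tau_A A t * int (p_A A (m-t)))"
    by (simp add: tau_A_def mult.commute)
  finally show ?thesis .
qed

lemma p_P:
  assumes pos: "\<forall>a\<in>A. 0 < a"
  shows "int m * int (p_A A m) = (\<Sum>t=1..m. sigma_A A t * int (p_A A (m-t)))"
proof -
  have "int m * int (p_A A m) = (\<Sum>M\<in>parts_p A m. int m)"
    unfolding p_A_def by simp
  also have "\<dots> = (\<Sum>M\<in>parts_p A m. \<Sum>a\<in>{a\<in>A. a \<le> m}. (\<lambda>a. int a) a * int (count M a))"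
  proof (rule sum.cong[OF refl])
    fix M assume M: "M \<in> parts_p A m"
    have "int m = int (\<Sum>x\<in>{a\<in>A. a \<le> m}. count M x * x)" using parts_p_count(1)[OF pos M] by simp
    then show "int m = (\<Sum>a\<in>{a\<in>A. a \<le> m}. (\<lambda>a. int a) a * int (count M a))"
      by (simp add: of_nat_sum mult.commute)
  qed
  also have "\<dots> = (\<Sum>a\<in>{a\<in>A. a \<le> m}. \<Sum>j=1..m div a. (\<lambda>a j. int a) a j * (\<lambda>x. int (p_A A x)) (m - j*a))"
    unfolding weighted_p[OF pos] by simp
  also have "\<dots> = (\<Sum>s=1..m. (\<lambda>x. int (p_A A x)) (m-s) * (\<Sum>a\<in>{a\<in>A. a dvd s}. (\<lambda>a j. int a) a (s div a)))"
    by (rule reindexG[OF pos])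
  also have "\<dots> = (\<Sum>t=1..m. sigma_A A t * int (p_A A (m-t)))"
    by (simp add: sigma_A_def mult.commute)
  finally show ?thesis .
qed

lemma q_N:
  assumes pos: "\<forall>a\<in>A. 0 < a"
  shows "int (Nq A m) = (\<Sum>t=1..m. tau_s_A A t * int (q_A A (m-t)))"
proof -
  have "int (Nq A m) = (\<Sum>S\<in>parts_q A m. \<Sum>a\<in>S. (1::int))"
    unfolding Nq_def by simp
  also have "\<dots> = (\<Sum>a\<in>{a\<in>A. a \<le> m}. 1 * int (card {S\<in>parts_q A m. a \<in> S}))"
    by (rule weighted_q)
  also have "\<dots> = (\<Sum>a\<in>{a\<in>A. a \<le> m}. \<Sum>j=1..m div a. (\<lambda>a j. (-1::int)^(j-1)) a j * (\<lambda>x. int (q_A A x)) (m - j*a))"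
    by (rule sum.cong[OF refl]) (simp add: Q_rec[OF pos])
  also have "\<dots> = (\<Sum>s=1..m. (\<lambda>x. int (q_A A x)) (m-s) * (\<Sum>a\<in>{a\<in>A. a dvd s}. (\<lambda>a j. (-1::int)^(j-1)) a (s div a)))"
    by (rule reindexG[OF pos])
  also have "\<dots> = (\<Sum>t=1..m. tau_s_A A t * int (q_A A (m-t)))"
    by (simp add: tau_s_A_def mult.commute)
  finally show ?thesis .
qed

lemma q_P:
  assumes pos: "\<forall>a\<in>A. 0 < a"
  shows "int m * int (q_A A m) = (\<Sum>t=1..m. sigma_s_A A t * int (q_A A (m-t)))"
proof -
  have "int m * int (q_A A m) = (\<Sum>S\<in>parts_q A m. int m)"
    unfolding q_A_def by simp
  also have "\<dots> = (\<Sum>S\<in>parts_q A m. \<Sum>a\<in>S. int a)"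
    by (rule sum.cong[OF refl]) (auto simp: parts_q_def of_nat_sum)
  also have "\<dots> = (\<Sum>a\<in>{a\<in>A. a \<le> m}. int a * int (card {S\<in>parts_q A m. a \<in> S}))"
    by (rule weighted_q)
  also have "\<dots> = (\<Sum>a\<in>{a\<in>A. a \<le> m}. \<Sum>j=1..m div a. (\<lambda>a j. (-1::int)^(j-1) * int a) a j * (\<lambda>x. int (q_A A x)) (m - j*a))"
  proof (rule sum.cong[OF refl])
    fix a assume "a \<in> {a\<in>A. a \<le> m}"
    then have "a \<in> A" by simp
    then show "int a * int (card {S\<in>parts_q A m. a \<in> S}) = (\<Sum>j=1..m div a. (\<lambda>a j. (-1::int)^(j-1) * int a) a j * (\<lambda>x. int (q_A A x)) (m - j*a))"
      by (simp add: Q_rec[OF pos] sum_distrib_left mult_ac)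
  qed
  also have "\<dots> = (\<Sum>s=1..m. (\<lambda>x. int (q_A A x)) (m-s) * (\<Sum>a\<in>{a\<in>A. a dvd s}. (\<lambda>a j. (-1::int)^(j-1) * int a) a (s div a)))"
    by (rule reindexG[OF pos])
  also have "\<dots> = (\<Sum>t=1..m. sigma_s_A A t * int (q_A A (m-t)))"
    by (simp add: sigma_s_A_def mult.commute)
  finally show ?thesis .
qed

theorem theorem4:
  fixes A :: "nat set" and n :: nat
  assumes "A \<noteq> {}" and "\<forall>a\<in>A. 0 < a" and "0 < n"
  shows "(int n * int (Np A n) =
           (\<Sum>k=1..n-1. int (Np A k) * sigma_A A (n - k))
         + (\<Sum>t=1..n. int t * tau_A A t * int (p_A A (n - t))))
       \<and> (int n * int (Nq A n) =
           (\<Sum>k=1..n-1. int (Nq A k) * sigma_s_A A (n - k))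
         + (\<Sum>t=1..n. int t * tau_s_A A t * int (q_A A (n - t))))"
proof
  show "int n * int (Np A n) =
           (\<Sum>k=1..n-1. int (Np A k) * sigma_A A (n - k))
         + (\<Sum>t=1..n. int t * tau_A A t * int (p_A A (n - t)))"
    by (rule alg[where N = "\<lambda>m. int (Np A m)" and P = "\<lambda>m. int (p_A A m)"])
       (rule p_N[OF assms(2)], rule p_P[OF assms(2)])
  show "int n * int (Nq A n) =
           (\<Sum>k=1..n-1. int (Nq A k) * sigma_s_A A (n - k))
         + (\<Sum>t=1..n. int t * tau_s_A A t * int (q_A A (n - t)))"
    by (rule alg[where N = "\<lambda>m. int (Nq A m)" and P = "\<lambda>m. int (q_A A m)"])
       (rule q_N[OF assms(2)], rule q_P[OF assms(2)])
qed

end
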